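(* Let $\lambda>0$ and $g^*\ge 0$. For finite disjoint instance sets $I_L, I_R$ whose instances $i$ carry real gradients $g_i$, define the split gain $$G(I_L,I_R)=\frac{\left(\sum_{i\in I_L}g_i\right)^2}{|I_L|+\lambda}+\frac{\left(\sum_{i\in I_R}g_i\right)^2}{|I_R|+\lambda}.$$ Let $\Delta G$ be the sensitivity of $G$: the supremum of $|G(I_L,I_R)-G(I_L',I_R')|$ over all pairs of neighboring split configurations in which every gradient involved satisfies $|g_i|\le g^*$. Then $\Delta G\le 3{g^*}^2$.
   Context: Two split configurations $(I_L,I_R)$ and $(I_L',I_R')$ are neighboring if one is obtained from the other by adding a single instance $s$ (with gradient $g_s$) to one of the two children, i.e. $(I_L',I_R')=(I_L\cup\{s\},I_R)$ or $(I_L,I_R\cup\{s\})$, or vice versa. Here $g^*=\max_i |g_i|$ over the instances in the dataset. *)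

theory Defs
  imports Complex_Main
begin

definition split_gain :: "real \<Rightarrow> ('a \<Rightarrow> real) \<Rightarrow> 'a set \<Rightarrow> 'a set \<Rightarrow> real" where
  "split_gain lam g IL IR =
     (\<Sum>i\<in>IL. g i)^2 / (real (card IL) + lam) + (\<Sum>i\<in>IR. g i)^2 / (real (card IR) + lam)"

definition valid_split :: "'a set \<Rightarrow> 'a set \<Rightarrow> bool" where
  "valid_split IL IR \<longleftrightarrow> finite IL \<and> finite IR \<and> IL \<inter> IR = {}"

definition adds_one :: "'a set \<Rightarrow> 'a set \<Rightarrow> 'a set \<Rightarrow> 'a set \<Rightarrow> bool" where
  "adds_one IL IR IL' IR' \<longleftrightarrow>
     (\<exists>s. s \<notin> IL \<union> IR \<and> ((IL' = insert s IL \<and> IR' = IR) \<or> (IL' = IL \<and> IR' = insert s IR)))"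

definition neighboring :: "'a set \<Rightarrow> 'a set \<Rightarrow> 'a set \<Rightarrow> 'a set \<Rightarrow> bool" where
  "neighboring IL IR IL' IR' \<longleftrightarrow> adds_one IL IR IL' IR' \<or> adds_one IL' IR' IL IR"

definition gain_sensitivity :: "'a itself \<Rightarrow> real \<Rightarrow> real \<Rightarrow> real" where
  "gain_sensitivity (T::'a itself) lam gs = Sup {\<bar>split_gain lam g IL IR - split_gain lam g IL' IR'\<bar> | (g::'a \<Rightarrow> real) IL IR IL' IR'.
      valid_split IL IR \<and> valid_split IL' IR' \<and> neighboring IL IR IL' IR' \<and>
      (\<forall>i \<in> IL \<union> IR \<union> IL' \<union> IR'. \<bar>g i\<bar> \<le> gs)}"

end

theory Submission
  imports Defs
begin

lemma core:
  fixes a S g G :: real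
  assumes a: "a > 0" and S: "\<bar>S\<bar> \<le> a * G" and g: "\<bar>g\<bar> \<le> G"
  shows "\<bar>(S+g)^2/(a+1) - S^2/a\<bar> \<le> 3*G^2"
proof -
  have G: "G \<ge> 0" using g by linarith
  have eq: "(S+g)^2/(a+1) - S^2/a = (2*a*S*g + a*g^2 - S^2)/(a*(a+1))"
  proof -
    have "(S+g)^2/(a+1) - S^2/a = ((S+g)^2*a - S^2*(a+1))/((a+1)*a)"
      using a by (subst diff_frac_eq) auto
    also have "(S+g)^2*a - S^2*(a+1) = 2*a*S*g + a*g^2 - S^2" by algebra
    also have "(a+1)*a = a*(a+1)" by simp
    finally show ?thesis .
  qed
  have "\<bar>g\<bar>^2 \<le> G^2" using g by (intro power_mono) auto
  hence g2: "g^2 \<le> G^2" by simp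
  have "\<bar>S\<bar>^2 \<le> (a*G)^2" using S by (intro power_mono) auto
  hence S2: "S^2 \<le> (a*G)^2" by simp
  have sq: "0 \<le> (S - a*g)^2" by simp
  have "(S - a*g)^2 = S^2 - 2*a*S*g + a^2*g^2" by algebra
  hence up1: "2*a*S*g - S^2 \<le> a^2*g^2" using sq by linarith
  have e1: "a^2*g^2 + a*g^2 = (a*(a+1))*g^2" by algebra
  have m1: "(a*(a+1))*g^2 \<le> (a*(a+1))*G^2" using g2 a by (intro mult_left_mono) auto
  have G3: "G^2 \<le> 3*G^2" by simp
  have m2: "(a*(a+1))*G^2 \<le> (a*(a+1))*(3*G^2)" using G3 a by (intro mult_left_mono) auto
  have up: "2*a*S*g + a*g^2 - S^2 \<le> (a*(a+1))*(3*G^2)"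
    using up1 e1 m1 m2 by linarith
  have Sg: "\<bar>S*g\<bar> \<le> (a*G)*G" unfolding abs_mult using S g a G
    by (intro mult_mono) auto
  have Sg2: "S*g \<ge> -(a*G*G)" using Sg by linarith
  have "(2*a)*(S*g) \<ge> (2*a)*(-(a*G*G))" using Sg2 a by (intro mult_left_mono) auto
  hence l1: "2*a*S*g \<ge> -(2*(a*G)^2)" by (simp add: power2_eq_square mult.assoc mult.left_commute)
  have ag: "a*g^2 \<ge> 0" using a by simp
  have l2: "(a*(a+1))*(3*G^2) = 3*(a*G)^2 + 3*a*G^2" by algebra
  have l3: "3*a*G^2 \<ge> 0" using a by simp
  have lo: "-((a*(a+1))*(3*G^2)) \<le> 2*a*S*g + a*g^2 - S^2"
    using l1 ag l2 l3 S2 by linarith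
  have pos: "a*(a+1) > 0" using a by simp
  have Nb: "\<bar>2*a*S*g + a*g^2 - S^2\<bar> \<le> (a*(a+1))*(3*G^2)" using up lo by linarith
  have "\<bar>(2*a*S*g + a*g^2 - S^2)/(a*(a+1))\<bar> = \<bar>2*a*S*g + a*g^2 - S^2\<bar>/(a*(a+1))"
    using pos by simp
  also have "\<dots> \<le> 3*G^2" using Nb pos by (simp add: divide_le_eq mult.commute)
  finally have "\<bar>(2*a*S*g + a*g^2 - S^2)/(a*(a+1))\<bar> \<le> 3*G^2" .
  thus ?thesis using eq by simp
qed

lemma add_one:
  fixes g :: "'a \<Rightarrow> real"
  assumes lam: "lam > 0" and fin: "finite I" and s: "s \<notin> I"
    and b: "\<forall>i\<in>insert s I. \<bar>g i\<bar> \<le> G"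
  shows "\<bar>(\<Sum>i\<in>insert s I. g i)^2/(real (card (insert s I)) + lam)
          - (\<Sum>i\<in>I. g i)^2/(real (card I) + lam)\<bar> \<le> 3*G^2"
proof -
  have G: "G \<ge> 0" using b by (meson abs_ge_zero insertI1 order_trans)
  have "\<bar>\<Sum>i\<in>I. g i\<bar> \<le> (\<Sum>i\<in>I. \<bar>g i\<bar>)" by (rule sum_abs)
  also have "\<dots> \<le> (\<Sum>i\<in>I. G)" using b by (intro sum_mono) auto
  also have "\<dots> = real (card I) * G" by simp
  also have "\<dots> \<le> (real (card I) + lam) * G" using lam G by (intro mult_right_mono) auto
  finally have S: "\<bar>\<Sum>i\<in>I. g i\<bar> \<le> (real (card I) + lam) * G" .
  have "\<bar>((\<Sum>i\<in>I. g i) + g s)^2/((real (card I) + lam)+1) - (\<Sum>i\<in>I. g i)^2/(real (card I) + lam)\<bar> \<le> 3*G^2"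
    using lam S b by (intro core) auto
  moreover have "(\<Sum>i\<in>insert s I. g i) = (\<Sum>i\<in>I. g i) + g s" using fin s by simp
  moreover have "real (card (insert s I)) + lam = (real (card I) + lam) + 1" using fin s by simp
  ultimately show ?thesis by (simp only: add.assoc add.commute[of lam 1])
qed

lemma adds_bound:
  fixes g :: "'a \<Rightarrow> real"
  assumes lam: "lam > 0" and v: "valid_split IL IR" and ad: "adds_one IL IR IL' IR'"
    and b: "\<forall>i \<in> IL \<union> IR \<union> IL' \<union> IR'. \<bar>g i\<bar> \<le> G"
  shows "\<bar>split_gain lam g IL IR - split_gain lam g IL' IR'\<bar> \<le> 3*G^2"
proof -
  obtain s where s: "s \<notin> IL \<union> IR"
    and c: "(IL' = insert s IL \<and> IR' = IR) \<or> (IL' = IL \<and> IR' = insert s IR)"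
    using ad unfolding adds_one_def by blast
  from c show ?thesis
  proof
    assume h: "IL' = insert s IL \<and> IR' = IR"
    have "\<bar>(\<Sum>i\<in>insert s IL. g i)^2/(real (card (insert s IL)) + lam)
          - (\<Sum>i\<in>IL. g i)^2/(real (card IL) + lam)\<bar> \<le> 3*G^2"
      using lam v s b h unfolding valid_split_def by (intro add_one) auto
    moreover from h have "IL' = insert s IL" "IR' = IR" by auto
    ultimately show ?thesis unfolding split_gain_def by (simp only:; linarith)
  next
    assume h: "IL' = IL \<and> IR' = insert s IR"
    have "\<bar>(\<Sum>i\<in>insert s IR. g i)^2/(real (card (insert s IR)) + lam)
          - (\<Sum>i\<in>IR. g i)^2/(real (card IR) + lam)\<bar> \<le> 3*G^2"
      using lam v s b h unfolding valid_split_def by (intro add_one) auto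
    moreover from h have "IL' = IL" "IR' = insert s IR" by auto
    ultimately show ?thesis unfolding split_gain_def by (simp only:; linarith)
  qed
qed

theorem lemma1:
  fixes lam gs :: real
  assumes "lam > 0" and "gs \<ge> 0"
  shows "gain_sensitivity TYPE('a) lam gs \<le> 3 * gs^2"
  unfolding gain_sensitivity_def
proof (rule cSup_least)
  obtain s :: 'a where True by simp
  let ?g = "(\<lambda>_. 0) :: 'a \<Rightarrow> real"
  have "valid_split ({}::'a set) {}" "valid_split {s} {}"
    unfolding valid_split_def by auto
  moreover have "neighboring ({}::'a set) {} {s} {}"
    unfolding neighboring_def adds_one_def by auto
  ultimately have "\<bar>split_gain lam ?g {} {} - split_gain lam ?g {s} {}\<bar> \<in> {\<bar>split_gain lam g IL IR - split_gain lam g IL' IR'\<bar> | (g::'a \<Rightarrow> real) IL IR IL' IR'.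
      valid_split IL IR \<and> valid_split IL' IR' \<and> neighboring IL IR IL' IR' \<and>
      (\<forall>i \<in> IL \<union> IR \<union> IL' \<union> IR'. \<bar>g i\<bar> \<le> gs)}"
    using assms(2) by (intro CollectI exI[of _ ?g] exI[of _ "{}"] exI[of _ "{s}"]) simp
  thus "{\<bar>split_gain lam g IL IR - split_gain lam g IL' IR'\<bar> | (g::'a \<Rightarrow> real) IL IR IL' IR'.
      valid_split IL IR \<and> valid_split IL' IR' \<and> neighboring IL IR IL' IR' \<and>
      (\<forall>i \<in> IL \<union> IR \<union> IL' \<union> IR'. \<bar>g i\<bar> \<le> gs)} \<noteq> {}"
    by (metis empty_iff)
next
  fix x assume "x \<in> {\<bar>split_gain lam g IL IR - split_gain lam g IL' IR'\<bar> | (g::'a \<Rightarrow> real) IL IR IL' IR'.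
      valid_split IL IR \<and> valid_split IL' IR' \<and> neighboring IL IR IL' IR' \<and>
      (\<forall>i \<in> IL \<union> IR \<union> IL' \<union> IR'. \<bar>g i\<bar> \<le> gs)}"
  then obtain g :: "'a \<Rightarrow> real" and IL IR IL' IR' :: "'a set" where x: "x = \<bar>split_gain lam g IL IR - split_gain lam g IL' IR'\<bar>"
    and v: "valid_split IL IR" "valid_split IL' IR'" and n: "neighboring IL IR IL' IR'"
    and b: "\<forall>i \<in> IL \<union> IR \<union> IL' \<union> IR'. \<bar>g i\<bar> \<le> gs" by (elim CollectE exE conjE) blast
  from n show "x \<le> 3 * gs^2" unfolding neighboring_def
  proof
    assume a: "adds_one IL IR IL' IR'"
    show ?thesis unfolding x by (rule adds_bound[OF assms(1) v(1) a b])
  next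
    assume a: "adds_one IL' IR' IL IR"
    have b': "\<forall>i \<in> IL' \<union> IR' \<union> IL \<union> IR. \<bar>g i\<bar> \<le> gs" using b by blast
    have "\<bar>split_gain lam g IL' IR' - split_gain lam g IL IR\<bar> \<le> 3*gs^2"
      using adds_bound[OF assms(1) v(2) a b'] .
    thus ?thesis unfolding x by (simp only: abs_minus_commute)
  qed
qed

end
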